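(* If $G$ is a connected graph with diameter at most two, then $\chi_L(G)=\chi_{L_2}(G)$.
   Context: All graphs are finite and simple. A proper $k$-coloring of $G$ is a map $f$ from $V(G)$ onto $[k]=\{1,\dots,k\}$ with adjacent vertices receiving different colors; $f(S)=\{f(u):u\in S\}$ and $N_G(u)$ is the neighborhood of $u$. For a connected graph $G$ with proper $k$-coloring $f$ and color classes $V_i=f^{-1}(i)$, the color code of $v$ is $(d(v,V_1),\dots,d(v,V_k))$, where $d(v,S)=\min_{x\in S}d(v,x)$; $f$ is a locating coloring if distinct vertices have distinct color codes, and $\chi_L(G)$ is the minimum number of colors in a locating coloring. A proper $k$-coloring $f$ is a neighbor locating coloring if for any two distinct vertices $u,v$ with $f(u)=f(v)$ we have $f(N_G(u))\ne f(N_G(v))$; $\chi_{L_2}(G)$ is the minimum number of colors in a neighbor locating coloring of $G$. *)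

theory Defs
  imports Main
begin

definition simple_graph :: "'a set \<Rightarrow> ('a \<Rightarrow> 'a \<Rightarrow> bool) \<Rightarrow> bool" where
  "simple_graph V E \<longleftrightarrow> finite V \<and> (\<forall>u v. E u v \<longrightarrow> u \<in> V \<and> v \<in> V)
     \<and> (\<forall>u v. E u v \<longrightarrow> E v u) \<and> (\<forall>u. \<not> E u u)"

(* xs is a walk in (V,E) from u to v of length (length xs - 1) *)
definition is_walk :: "'a set \<Rightarrow> ('a \<Rightarrow> 'a \<Rightarrow> bool) \<Rightarrow> 'a list \<Rightarrow> 'a \<Rightarrow> 'a \<Rightarrow> bool" where
  "is_walk V E xs u v \<longleftrightarrow> xs \<noteq> [] \<and> hd xs = u \<and> last xs = v \<and> set xs \<subseteq> V
     \<and> (\<forall>i. Suc i < length xs \<longrightarrow> E (xs ! i) (xs ! Suc i))"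

definition connected_graph :: "'a set \<Rightarrow> ('a \<Rightarrow> 'a \<Rightarrow> bool) \<Rightarrow> bool" where
  "connected_graph V E \<longleftrightarrow> simple_graph V E \<and> V \<noteq> {}
     \<and> (\<forall>u\<in>V. \<forall>v\<in>V. \<exists>xs. is_walk V E xs u v)"

(* distance d(u,v): least length of a walk from u to v (meaningful in connected graphs) *)
definition gdist :: "'a set \<Rightarrow> ('a \<Rightarrow> 'a \<Rightarrow> bool) \<Rightarrow> 'a \<Rightarrow> 'a \<Rightarrow> nat" where
  "gdist V E u v = (LEAST n. \<exists>xs. is_walk V E xs u v \<and> length xs = Suc n)"

definition diameter_at_most :: "'a set \<Rightarrow> ('a \<Rightarrow> 'a \<Rightarrow> bool) \<Rightarrow> nat \<Rightarrow> bool" where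
  "diameter_at_most V E m \<longleftrightarrow> (\<forall>u\<in>V. \<forall>v\<in>V. gdist V E u v \<le> m)"

definition nbhd :: "'a set \<Rightarrow> ('a \<Rightarrow> 'a \<Rightarrow> bool) \<Rightarrow> 'a \<Rightarrow> 'a set" where
  "nbhd V E u = {w \<in> V. E u w}"

definition proper_coloring :: "'a set \<Rightarrow> ('a \<Rightarrow> 'a \<Rightarrow> bool) \<Rightarrow> nat \<Rightarrow> ('a \<Rightarrow> nat) \<Rightarrow> bool" where
  "proper_coloring V E k f \<longleftrightarrow> f ` V = {1..k} \<and> (\<forall>u\<in>V. \<forall>v\<in>V. E u v \<longrightarrow> f u \<noteq> f v)"

definition dist_class :: "'a set \<Rightarrow> ('a \<Rightarrow> 'a \<Rightarrow> bool) \<Rightarrow> ('a \<Rightarrow> nat) \<Rightarrow> 'a \<Rightarrow> nat \<Rightarrow> nat" where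
  "dist_class V E f v i = Min ((\<lambda>x. gdist V E v x) ` {x \<in> V. f x = i})"

definition color_code :: "'a set \<Rightarrow> ('a \<Rightarrow> 'a \<Rightarrow> bool) \<Rightarrow> nat \<Rightarrow> ('a \<Rightarrow> nat) \<Rightarrow> 'a \<Rightarrow> nat list" where
  "color_code V E k f v = map (dist_class V E f v) [1..<Suc k]"

definition locating_coloring :: "'a set \<Rightarrow> ('a \<Rightarrow> 'a \<Rightarrow> bool) \<Rightarrow> nat \<Rightarrow> ('a \<Rightarrow> nat) \<Rightarrow> bool" where
  "locating_coloring V E k f \<longleftrightarrow> proper_coloring V E k f \<and> inj_on (color_code V E k f) V"

definition neighbor_locating_coloring :: "'a set \<Rightarrow> ('a \<Rightarrow> 'a \<Rightarrow> bool) \<Rightarrow> nat \<Rightarrow> ('a \<Rightarrow> nat) \<Rightarrow> bool" where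
  "neighbor_locating_coloring V E k f \<longleftrightarrow> proper_coloring V E k f \<and>
     (\<forall>u\<in>V. \<forall>v\<in>V. u \<noteq> v \<and> f u = f v \<longrightarrow> f ` nbhd V E u \<noteq> f ` nbhd V E v)"

definition locating_chromatic_number :: "'a set \<Rightarrow> ('a \<Rightarrow> 'a \<Rightarrow> bool) \<Rightarrow> nat" where
  "locating_chromatic_number V E = (LEAST k. \<exists>f. locating_coloring V E k f)"

definition neighbor_locating_chromatic_number :: "'a set \<Rightarrow> ('a \<Rightarrow> 'a \<Rightarrow> bool) \<Rightarrow> nat" where
  "neighbor_locating_chromatic_number V E = (LEAST k. \<exists>f. neighbor_locating_coloring V E k f)"

end

theory Submission imports Defs begin
lemma walk_single: "u \<in> V \<Longrightarrow> is_walk V E [u] u u"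
  by (simp add: is_walk_def)

lemma gdist_ex:
  assumes "connected_graph V E" "u \<in> V" "x \<in> V"
  shows "\<exists>xs. is_walk V E xs u x \<and> length xs = Suc (gdist V E u x)"
proof -
  obtain xs where w: "is_walk V E xs u x" using assms unfolding connected_graph_def by blast
  then have "is_walk V E xs u x \<and> length xs = Suc (length xs - 1)"
    unfolding is_walk_def by (cases xs) auto
  then have "\<exists>n xs. is_walk V E xs u x \<and> length xs = Suc n" by blast
  then show ?thesis unfolding gdist_def by (rule LeastI_ex)
qed

lemma gdist_0:
  assumes "connected_graph V E" "u \<in> V" "x \<in> V"
  shows "gdist V E u x = 0 \<longleftrightarrow> x = u"
proof
  assume h: "gdist V E u x = 0"
  then obtain ys where y: "is_walk V E ys u x" "length ys = 1" using gdist_ex[OF assms] by auto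
  then obtain a where "ys = [a]" by (cases ys) auto
  then show "x = u" using y unfolding is_walk_def by auto
next
  assume "x = u"
  then have "is_walk V E [u] u x" using assms walk_single by simp
  then have "\<exists>xs. is_walk V E xs u x \<and> length xs = Suc 0" by force
  then show "gdist V E u x = 0" unfolding gdist_def by (rule Least_eq_0)
qed

lemma gdist_1:
  assumes "connected_graph V E" "u \<in> V" "x \<in> V"
  shows "gdist V E u x = 1 \<longleftrightarrow> E u x"
proof
  assume h: "gdist V E u x = 1"
  then obtain ys where y: "is_walk V E ys u x" "length ys = 2" using gdist_ex[OF assms] by auto
  then obtain a b where ab: "ys = [a,b]" by (cases ys; cases "tl ys") auto
  have "E (ys!0) (ys!Suc 0)" using y unfolding is_walk_def by auto
  then show "E u x" using y ab unfolding is_walk_def by auto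
next
  assume e: "E u x"
  then have "u \<noteq> x" using assms unfolding connected_graph_def simple_graph_def by auto
  then have ne: "gdist V E u x \<noteq> 0" using gdist_0[OF assms] by auto
  have "\<forall>i. Suc i < 2 \<longrightarrow> E ([u,x] ! i) ([u,x] ! Suc i)" using e
    by (auto simp: less_Suc_eq)
  then have "is_walk V E [u,x] u x" using assms unfolding is_walk_def by auto
  then have "\<exists>xs. is_walk V E xs u x \<and> length xs = Suc 1" by force
  then have "gdist V E u x \<le> 1" unfolding gdist_def by (rule Least_le)
  then show "gdist V E u x = 1" using ne by simp
qed
lemma dist_class_eq:
  assumes c: "connected_graph V E" and d: "diameter_at_most V E 2"
    and p: "proper_coloring V E k f" and v: "v \<in> V" and i: "i \<in> {1..k}"
  shows "dist_class V E f v i = (if f v = i then 0 else if i \<in> f ` nbhd V E v then 1 else 2)"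
proof -
  let ?S = "(\<lambda>x. gdist V E v x) ` {x \<in> V. f x = i}"
  have fin: "finite V" using c unfolding connected_graph_def simple_graph_def by blast
  have "i \<in> f ` V" using p i unfolding proper_coloring_def by simp
  then obtain y where "y \<in> V" "f y = i" by blast
  then have ne: "{x \<in> V. f x = i} \<noteq> {}" by blast
  have finS: "finite ?S" using fin by simp
  have neS: "?S \<noteq> {}" using ne by blast
  have le2: "s \<le> 2" if s: "s\<in>?S" for s
  proof -
    obtain x where x: "x \<in> V" "s = gdist V E v x" using s by blast
    then show ?thesis using d v unfolding diameter_at_most_def by simp
  qed
  have dc: "dist_class V E f v i = Min ?S" unfolding dist_class_def by simp
  show ?thesis
  proof (cases "f v = i")
    case True
    have "gdist V E v v = 0" using gdist_0[OF c v v] by simp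
    then have "0 \<in> ?S" using True v by (intro rev_image_eqI[of v]) auto
    then have "Min ?S \<le> 0" using finS by (rule Min_le[rotated])
    then have "Min ?S = 0" by simp
    then show ?thesis using True dc by simp
  next
    case F: False
    have n0: "s \<noteq> 0" if s: "s\<in>?S" for s
    proof -
      obtain x where x: "x \<in> V" "f x = i" "s = gdist V E v x" using s by blast
      have "x \<noteq> v" using x F by blast
      then show ?thesis using gdist_0[OF c v x(1)] x(3) by simp
    qed
    show ?thesis
    proof (cases "i \<in> f ` nbhd V E v")
      case True
      then obtain x where x: "x \<in> V" "E v x" "f x = i" unfolding nbhd_def by blast
      have "gdist V E v x = 1" using gdist_1[OF c v x(1)] x(2) by simp
      then have "1 \<in> ?S" using x by (intro rev_image_eqI[of x]) auto
      moreover have "1 \<le> s" if "s\<in>?S" for s using n0[OF that] by simp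
      ultimately have "Min ?S = 1"
      proof -
        assume a: "1 \<in> ?S" and b: "\<And>s. s\<in>?S \<Longrightarrow> 1 \<le> s"
        have "Min ?S \<le> 1" using finS a by (rule Min_le)
        moreover have "Min ?S \<in> ?S" using finS neS by (rule Min_in)
        ultimately show ?thesis using b by (meson le_antisym)
      qed
      then show ?thesis using True F dc by simp
    next
      case False
      have n1: "s \<noteq> 1" if s: "s\<in>?S" for s
      proof -
        obtain x where x: "x \<in> V" "f x = i" "s = gdist V E v x" using s by blast
        have "\<not> E v x" using False x unfolding nbhd_def by blast
        then show ?thesis using gdist_1[OF c v x(1)] x(3) by simp
      qed
      have two: "s = 2" if "s\<in>?S" for s using n0[OF that] n1[OF that] le2[OF that] by linarith
      obtain s0 where s0: "s0 \<in> ?S" using neS by blast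
      have "?S = {2}"
      proof
        show "?S \<subseteq> {2}" using two by blast
        show "{2} \<subseteq> ?S" using s0 two[OF s0] by simp
      qed
      then have "Min ?S = 2" by simp
      then show ?thesis using F False dc by simp
    qed
  qed
qed

lemma code_eq:
  assumes c: "connected_graph V E" and d: "diameter_at_most V E 2"
    and p: "proper_coloring V E k f" and v: "v \<in> V"
  shows "color_code V E k f v =
     map (\<lambda>i. if f v = i then 0 else if i \<in> f ` nbhd V E v then 1 else (2::nat)) [1..<Suc k]"
  unfolding color_code_def using dist_class_eq[OF c d p v] by (auto intro: map_cong)

lemma equiv_col:
  assumes c: "connected_graph V E" and d: "diameter_at_most V E 2"
  shows "locating_coloring V E k f \<longleftrightarrow> neighbor_locating_coloring V E k f"
proof (cases "proper_coloring V E k f")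
  case False
  then show ?thesis unfolding locating_coloring_def neighbor_locating_coloring_def by simp
next
  case p: True
  let ?g = "\<lambda>v i. if f v = i then 0 else if i \<in> f ` nbhd V E v then 1 else (2::nat)"
  have ceq: "\<And>u v. u \<in> V \<Longrightarrow> v \<in> V \<Longrightarrow>
     color_code V E k f u = color_code V E k f v \<longleftrightarrow> (\<forall>i\<in>{1..k}. ?g u i = ?g v i)"
  proof -
    fix u v assume "u \<in> V" "v \<in> V"
    moreover have "set [1..<Suc k] = {1..k}" by auto
    ultimately show "color_code V E k f u = color_code V E k f v \<longleftrightarrow> (\<forall>i\<in>{1..k}. ?g u i = ?g v i)"
      using code_eq[OF c d p] by (simp only: map_eq_conv)
  qed
  have fk: "\<And>u. u \<in> V \<Longrightarrow> f u \<in> {1..k}" using p unfolding proper_coloring_def by blast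
  have nk: "\<And>u. u \<in> V \<Longrightarrow> f ` nbhd V E u \<subseteq> {1..k}"
    using p unfolding proper_coloring_def nbhd_def by blast
  have nf: "\<And>u. u \<in> V \<Longrightarrow> f u \<notin> f ` nbhd V E u"
    using p unfolding proper_coloring_def nbhd_def by force
  have key: "\<And>u v. u \<in> V \<Longrightarrow> v \<in> V \<Longrightarrow>
     color_code V E k f u = color_code V E k f v \<longleftrightarrow> (f u = f v \<and> f ` nbhd V E u = f ` nbhd V E v)"
  proof -
    fix u v assume u: "u \<in> V" and v: "v \<in> V"
    show "color_code V E k f u = color_code V E k f v \<longleftrightarrow> (f u = f v \<and> f ` nbhd V E u = f ` nbhd V E v)"
    proof
      assume "color_code V E k f u = color_code V E k f v"
      then have h: "\<forall>i\<in>{1..k}. ?g u i = ?g v i" using ceq u v by blast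
      have fe: "f u = f v" using h[rule_format, OF fk[OF u]] by (auto split: if_splits)
      have "f ` nbhd V E u \<subseteq> f ` nbhd V E v"
      proof
        fix i assume i: "i \<in> f ` nbhd V E u"
        then have "i \<in> {1..k}" "i \<noteq> f u" using nk[OF u] nf[OF u] by blast+
        then show "i \<in> f ` nbhd V E v" using h i fe by (auto split: if_splits)
      qed
      moreover have "f ` nbhd V E v \<subseteq> f ` nbhd V E u"
      proof
        fix i assume i: "i \<in> f ` nbhd V E v"
        then have "i \<in> {1..k}" "i \<noteq> f v" using nk[OF v] nf[OF v] by blast+
        then show "i \<in> f ` nbhd V E u" using h i fe by (auto split: if_splits)
      qed
      ultimately show "f u = f v \<and> f ` nbhd V E u = f ` nbhd V E v" using fe by blast
    next
      assume "f u = f v \<and> f ` nbhd V E u = f ` nbhd V E v"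
      then show "color_code V E k f u = color_code V E k f v" using ceq u v by auto
    qed
  qed
  have "inj_on (color_code V E k f) V \<longleftrightarrow>
    (\<forall>u\<in>V. \<forall>v\<in>V. u \<noteq> v \<and> f u = f v \<longrightarrow> f ` nbhd V E u \<noteq> f ` nbhd V E v)"
    unfolding inj_on_def using key by metis
  then show ?thesis unfolding locating_coloring_def neighbor_locating_coloring_def
    using p by simp
qed

theorem proposition1:
  fixes V :: "'a set" and E :: "'a \<Rightarrow> 'a \<Rightarrow> bool"
  assumes "connected_graph V E"
    and "diameter_at_most V E 2"
  shows "locating_chromatic_number V E = neighbor_locating_chromatic_number V E"
proof -
  have "\<And>k. (\<exists>f. locating_coloring V E k f) = (\<exists>f. neighbor_locating_coloring V E k f)"
    using equiv_col[OF assms] by blast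
  then show ?thesis unfolding locating_chromatic_number_def neighbor_locating_chromatic_number_def by simp
qed

end
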